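(* Let $\mathbf{x}=(x_s)\in(\mathbb{R}_{>0})^{\mathbb{Z}^3}$ satisfy the positive Kashaev recurrence: for every $v\in\mathbb{Z}^3$, writing $z_{ijk}=x_{v+(i,j,k)}$ for $i,j,k\in\{0,1\}$, $$z_{111}=\frac{A+2\sqrt{D}}{z_{000}^2},$$ where $A=2z_{100}z_{010}z_{001}+z_{000}(z_{100}z_{011}+z_{010}z_{101}+z_{001}z_{110})$, $D=(z_{000}z_{011}+z_{010}z_{001})(z_{000}z_{101}+z_{100}z_{001})(z_{000}z_{110}+z_{100}z_{010})$, and $\sqrt{D}$ is the positive square root. Then for every $v\in\mathbb{Z}^3$, $$\prod_{C\ni v}K^C_v(\mathbf{x})=\prod_{S\ni v}(x_vx_{v_2}+x_{v_1}x_{v_3}),$$ where the first product is over the $8$ unit cubes $C$ in $\mathbb{Z}^3$ containing $v$, and the second is over the $12$ unit squares $S$ containing $v$, with $v,v_1,v_2,v_3$ the vertices of $S$ in cyclic order.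
   Context: For a unit cube $C$ in $\mathbb{Z}^3$ with vertex $v$ and $\mathbf{x}\in\mathbb{C}^{\mathbb{Z}^3}$, label the values of $\mathbf{x}$ at the vertices of $C$ as $z_{ijk}$, $i,j,k\in\{0,1\}$, via an identification of $C$ with $\{0,1\}^3$ (a cube isomorphism) sending $v$ to $000$, and set $K^C_v(\mathbf{x})=\tfrac12\big(z_{111}z_{000}^2-z_{000}(z_{100}z_{011}+z_{010}z_{101}+z_{001}z_{110})\big)-z_{100}z_{010}z_{001}$ (independent of the choice of identification). *)

theory Defs
  imports Complex_Main
begin

type_synonym pt = "int \<times> int \<times> int"

definition vadd :: "pt \<Rightarrow> pt \<Rightarrow> pt" where
  "vadd u w = (case u of (a, b, c) \<Rightarrow> case w of (d, e, f) \<Rightarrow> (a + d, b + e, c + f))"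


definition positive_kashaev :: "(pt \<Rightarrow> real) \<Rightarrow> bool" where
  "positive_kashaev x \<longleftrightarrow> (\<forall>s. x s > 0) \<and>
     (\<forall>v. let z = (\<lambda>i j k. x (vadd v (i, j, k)));
             A = 2 * z 1 0 0 * z 0 1 0 * z 0 0 1
                 + z 0 0 0 * (z 1 0 0 * z 0 1 1 + z 0 1 0 * z 1 0 1 + z 0 0 1 * z 1 1 0);
             D = (z 0 0 0 * z 0 1 1 + z 0 1 0 * z 0 0 1)
                 * (z 0 0 0 * z 1 0 1 + z 1 0 0 * z 0 0 1)
                 * (z 0 0 0 * z 1 1 0 + z 1 0 0 * z 0 1 0)
         in z 1 1 1 = (A + 2 * sqrt D) / (z 0 0 0)^2)"

text \<open>The unit cube containing v determined by signs (s1,s2,s3) in {-1,1}^3 has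
  vertices v + (s1 i, s2 j, s3 k), i,j,k in {0,1}; the map (i,j,k) \<mapsto> v + (s1 i, s2 j, s3 k)
  is a cube isomorphism {0,1}^3 \<rightarrow> C sending 000 to v.\<close>
definition Kcube :: "(pt \<Rightarrow> complex) \<Rightarrow> pt \<Rightarrow> pt \<Rightarrow> complex" where
  "Kcube x v s = (case s of (s1, s2, s3) \<Rightarrow>
     let z = (\<lambda>i j k. x (vadd v (s1 * i, s2 * j, s3 * k)))
     in (z 1 1 1 * (z 0 0 0)^2
          - z 0 0 0 * (z 1 0 0 * z 0 1 1 + z 0 1 0 * z 1 0 1 + z 0 0 1 * z 1 1 0)) / 2
        - z 1 0 0 * z 0 1 0 * z 0 0 1)"

definition signs3 :: "pt set" where
  "signs3 = {-1, 1} \<times> {-1, 1} \<times> {-1, 1}"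

definition evec :: "nat \<Rightarrow> int \<Rightarrow> pt" where
  "evec p s = (if p = 1 then (s, 0, 0) else if p = 2 then (0, s, 0) else (0, 0, s))"

text \<open>The unit square containing v spanned by directions p < q with signs s, t has vertices,
  in cyclic order, v, v1 = v + s e_p, v2 = v + s e_p + t e_q, v3 = v + t e_q.\<close>
definition sq_factor :: "(pt \<Rightarrow> real) \<Rightarrow> pt \<Rightarrow> (nat \<times> nat) \<times> int \<times> int \<Rightarrow> real" where
  "sq_factor x v d = (case d of ((p, q), s, t) \<Rightarrow>
     x v * x (vadd (vadd v (evec p s)) (evec q t)) + x (vadd v (evec p s)) * x (vadd v (evec q t)))"

definition squares_at :: "((nat \<times> nat) \<times> int \<times> int) set" where
  "squares_at = {(1, 2), (1, 3), (2, 3)} \<times> {-1, 1} \<times> {-1, 1}"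

end

theory Submission
  imports Defs
begin

definition Kf :: "real \<Rightarrow> real \<Rightarrow> real \<Rightarrow> real \<Rightarrow> real \<Rightarrow> real \<Rightarrow> real \<Rightarrow> real \<Rightarrow> real" where
  "Kf z0 z1 z2 z3 z23 z13 z12 z123 = (z123 * z0^2 - z0 * (z1 * z23 + z2 * z13 + z3 * z12)) / 2 - z1 * z2 * z3"
definition Df :: "real \<Rightarrow> real \<Rightarrow> real \<Rightarrow> real \<Rightarrow> real \<Rightarrow> real \<Rightarrow> real \<Rightarrow> real \<Rightarrow> real" where
  "Df z0 z1 z2 z3 z23 z13 z12 z123 = (z0 * z23 + z2 * z3) * (z0 * z13 + z1 * z3) * (z0 * z12 + z1 * z2)"

lemma v100:
  fixes a b c d e f g h S :: real
  assumes pos: "a>0" "b>0" "c>0" "d>0" "e>0" "f>0" "g>0" and S: "S > 0" "S^2 = (a*e+c*d)*(a*f+b*d)*(a*g+b*c)"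
  and h: "h = (2*b*c*d + a*(b*e+c*f+d*g) + 2*S)/a^2"
  shows "Kf b a g f h d c e < 0 \<and> (Kf b a g f h d c e)^2 = Df b a g f h d c e"
proof -
  have k: "Kf b a g f h d c e = - (b*S + (a*f+b*d)*(a*g+b*c))/(a)"
    using pos S unfolding Kf_def h by (simp add: field_simps power2_eq_square, algebra?)
  show ?thesis
  proof
    have "(b*S + (a*f+b*d)*(a*g+b*c)) > 0" using pos S by (intro add_pos_pos mult_pos_pos zero_less_power; simp)+
    then show "Kf b a g f h d c e < 0" unfolding k using pos by (simp add: divide_neg_pos)
    show "(Kf b a g f h d c e)^2 = Df b a g f h d c e" unfolding k unfolding Df_def h using pos S
      by (simp add: field_simps power2_eq_square) algebra
  qed
qed

lemma v010:
  fixes a b c d e f g h S :: real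
  assumes pos: "a>0" "b>0" "c>0" "d>0" "e>0" "f>0" "g>0" and S: "S > 0" "S^2 = (a*e+c*d)*(a*f+b*d)*(a*g+b*c)"
  and h: "h = (2*b*c*d + a*(b*e+c*f+d*g) + 2*S)/a^2"
  shows "Kf c g a e d h b f < 0 \<and> (Kf c g a e d h b f)^2 = Df c g a e d h b f"
proof -
  have k: "Kf c g a e d h b f = - (c*S + (a*g+b*c)*(a*e+c*d))/(a)"
    using pos S unfolding Kf_def h by (simp add: field_simps power2_eq_square, algebra?)
  show ?thesis
  proof
    have "(c*S + (a*g+b*c)*(a*e+c*d)) > 0" using pos S by (intro add_pos_pos mult_pos_pos zero_less_power; simp)+
    then show "Kf c g a e d h b f < 0" unfolding k using pos by (simp add: divide_neg_pos)
    show "(Kf c g a e d h b f)^2 = Df c g a e d h b f" unfolding k unfolding Df_def h using pos S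
      by (simp add: field_simps power2_eq_square) algebra
  qed
qed

lemma v001:
  fixes a b c d e f g h S :: real
  assumes pos: "a>0" "b>0" "c>0" "d>0" "e>0" "f>0" "g>0" and S: "S > 0" "S^2 = (a*e+c*d)*(a*f+b*d)*(a*g+b*c)"
  and h: "h = (2*b*c*d + a*(b*e+c*f+d*g) + 2*S)/a^2"
  shows "Kf d f e a c b h g < 0 \<and> (Kf d f e a c b h g)^2 = Df d f e a c b h g"
proof -
  have k: "Kf d f e a c b h g = - (d*S + (a*e+c*d)*(a*f+b*d))/(a)"
    using pos S unfolding Kf_def h by (simp add: field_simps power2_eq_square, algebra?)
  show ?thesis
  proof
    have "(d*S + (a*e+c*d)*(a*f+b*d)) > 0" using pos S by (intro add_pos_pos mult_pos_pos zero_less_power; simp)+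
    then show "Kf d f e a c b h g < 0" unfolding k using pos by (simp add: divide_neg_pos)
    show "(Kf d f e a c b h g)^2 = Df d f e a c b h g" unfolding k unfolding Df_def h using pos S
      by (simp add: field_simps power2_eq_square) algebra
  qed
qed

lemma v110:
  fixes a b c d e f g h S :: real
  assumes pos: "a>0" "b>0" "c>0" "d>0" "e>0" "f>0" "g>0" and S: "S > 0" "S^2 = (a*e+c*d)*(a*f+b*d)*(a*g+b*c)"
  and h: "h = (2*b*c*d + a*(b*e+c*f+d*g) + 2*S)/a^2"
  shows "Kf g c b h f e a d < 0 \<and> (Kf g c b h f e a d)^2 = Df g c b h f e a d"
proof -
  have k: "Kf g c b h f e a d = - (a^2*g*(b*e+c*f)+a*b*c*d*g + b*c*(2*b*c*d + a*(b*e+c*f+d*g)) + (g*a+2*b*c)*S)/(a^2)"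
    using pos S unfolding Kf_def h by (simp add: field_simps power2_eq_square, algebra?)
  show ?thesis
  proof
    have "(a^2*g*(b*e+c*f)+a*b*c*d*g + b*c*(2*b*c*d + a*(b*e+c*f+d*g)) + (g*a+2*b*c)*S) > 0" using pos S by (intro add_pos_pos mult_pos_pos zero_less_power; simp)+
    then show "Kf g c b h f e a d < 0" unfolding k using pos by (simp add: divide_neg_pos)
    show "(Kf g c b h f e a d)^2 = Df g c b h f e a d" unfolding k unfolding Df_def h using pos S
      by (simp add: field_simps power2_eq_square) algebra
  qed
qed

lemma v101:
  fixes a b c d e f g h S :: real
  assumes pos: "a>0" "b>0" "c>0" "d>0" "e>0" "f>0" "g>0" and S: "S > 0" "S^2 = (a*e+c*d)*(a*f+b*d)*(a*g+b*c)"
  and h: "h = (2*b*c*d + a*(b*e+c*f+d*g) + 2*S)/a^2"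
  shows "Kf f d h b g a e c < 0 \<and> (Kf f d h b g a e c)^2 = Df f d h b g a e c"
proof -
  have k: "Kf f d h b g a e c = - (a^2*f*(b*e+d*g)+a*b*c*d*f + b*d*(2*b*c*d + a*(b*e+c*f+d*g)) + (f*a+2*b*d)*S)/(a^2)"
    using pos S unfolding Kf_def h by (simp add: field_simps power2_eq_square, algebra?)
  show ?thesis
  proof
    have "(a^2*f*(b*e+d*g)+a*b*c*d*f + b*d*(2*b*c*d + a*(b*e+c*f+d*g)) + (f*a+2*b*d)*S) > 0" using pos S by (intro add_pos_pos mult_pos_pos zero_less_power; simp)+
    then show "Kf f d h b g a e c < 0" unfolding k using pos by (simp add: divide_neg_pos)
    show "(Kf f d h b g a e c)^2 = Df f d h b g a e c" unfolding k unfolding Df_def h using pos S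
      by (simp add: field_simps power2_eq_square) algebra
  qed
qed

lemma v011:
  fixes a b c d e f g h S :: real
  assumes pos: "a>0" "b>0" "c>0" "d>0" "e>0" "f>0" "g>0" and S: "S > 0" "S^2 = (a*e+c*d)*(a*f+b*d)*(a*g+b*c)"
  and h: "h = (2*b*c*d + a*(b*e+c*f+d*g) + 2*S)/a^2"
  shows "Kf e h d c a g f b < 0 \<and> (Kf e h d c a g f b)^2 = Df e h d c a g f b"
proof -
  have k: "Kf e h d c a g f b = - (a^2*e*(d*g+c*f)+a*b*c*d*e + d*c*(2*b*c*d + a*(b*e+c*f+d*g)) + (e*a+2*d*c)*S)/(a^2)"
    using pos S unfolding Kf_def h by (simp add: field_simps power2_eq_square, algebra?)
  show ?thesis
  proof
    have "(a^2*e*(d*g+c*f)+a*b*c*d*e + d*c*(2*b*c*d + a*(b*e+c*f+d*g)) + (e*a+2*d*c)*S) > 0" using pos S by (intro add_pos_pos mult_pos_pos zero_less_power; simp)+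
    then show "Kf e h d c a g f b < 0" unfolding k using pos by (simp add: divide_neg_pos)
    show "(Kf e h d c a g f b)^2 = Df e h d c a g f b" unfolding k unfolding Df_def h using pos S
      by (simp add: field_simps power2_eq_square) algebra
  qed
qed

lemma v111:
  fixes a b c d e f g h S :: real
  assumes pos: "a>0" "b>0" "c>0" "d>0" "e>0" "f>0" "g>0" and S: "S > 0" "S^2 = (a*e+c*d)*(a*f+b*d)*(a*g+b*c)"
  and h: "h = (2*b*c*d + a*(b*e+c*f+d*g) + 2*S)/a^2"
  shows "Kf h e f g b c d a > 0 \<and> (Kf h e f g b c d a)^2 = Df h e f g b c d a"
proof -
  have k: "Kf h e f g b c d a = (2*b*c*d*(2*b*c*d + a*(b*e+c*f+d*g)) + 4*(a^2*b*c*e*f + a^2*b*d*e*g + a^2*c*d*f*g + a*b^2*c*d*e + a*b*c^2*d*f + a*b*c*d^2*g + b^2*c^2*d^2) + 2*a^3*e*f*g + (8*b*c*d+2*a*(b*e+c*f+d*g))*S)/(2*a^3)"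
    using pos S unfolding Kf_def h by (simp add: field_simps power2_eq_square, algebra?)
  show ?thesis
  proof
    have "(2*b*c*d*(2*b*c*d + a*(b*e+c*f+d*g)) + 4*(a^2*b*c*e*f + a^2*b*d*e*g + a^2*c*d*f*g + a*b^2*c*d*e + a*b*c^2*d*f + a*b*c*d^2*g + b^2*c^2*d^2) + 2*a^3*e*f*g + (8*b*c*d+2*a*(b*e+c*f+d*g))*S) > 0" using pos S by (intro add_pos_pos mult_pos_pos zero_less_power; simp)+
    then show "Kf h e f g b c d a > 0" unfolding k using pos by (simp add: divide_pos_pos)
    show "(Kf h e f g b c d a)^2 = Df h e f g b c d a" unfolding k unfolding Df_def h using pos S
      by (simp add: field_simps power2_eq_square) algebra
  qed
qed


lemma v000:
  fixes a b c d e f g h S :: real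
  assumes pos: "a>0" "b>0" "c>0" "d>0" "e>0" "f>0" "g>0" and S: "S > 0" "S^2 = (a*e+c*d)*(a*f+b*d)*(a*g+b*c)"
  and h: "h = (2*b*c*d + a*(b*e+c*f+d*g) + 2*S)/a^2"
  shows "Kf a b c d e f g h > 0 \<and> (Kf a b c d e f g h)^2 = Df a b c d e f g h"
proof -
  have k: "Kf a b c d e f g h = S" using pos unfolding Kf_def h by (simp add: field_simps power2_eq_square)
  show ?thesis using S unfolding k Df_def by (simp add: algebra_simps)
qed

lemma cube_facts:
  fixes x :: "pt \<Rightarrow> real" and w :: pt
  assumes "positive_kashaev x"
  defines "y \<equiv> \<lambda>i j k. x (vadd w (i, j, k))"
  shows "Kf (y 0 0 0) (y 1 0 0) (y 0 1 0) (y 0 0 1) (y 0 1 1) (y 1 0 1) (y 1 1 0) (y 1 1 1) > 0 \<and> (Kf (y 0 0 0) (y 1 0 0) (y 0 1 0) (y 0 0 1) (y 0 1 1) (y 1 0 1) (y 1 1 0) (y 1 1 1))^2 = Df (y 0 0 0) (y 1 0 0) (y 0 1 0) (y 0 0 1) (y 0 1 1) (y 1 0 1) (y 1 1 0) (y 1 1 1)"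
    and "Kf (y 1 0 0) (y 0 0 0) (y 1 1 0) (y 1 0 1) (y 1 1 1) (y 0 0 1) (y 0 1 0) (y 0 1 1) < 0 \<and> (Kf (y 1 0 0) (y 0 0 0) (y 1 1 0) (y 1 0 1) (y 1 1 1) (y 0 0 1) (y 0 1 0) (y 0 1 1))^2 = Df (y 1 0 0) (y 0 0 0) (y 1 1 0) (y 1 0 1) (y 1 1 1) (y 0 0 1) (y 0 1 0) (y 0 1 1)"
    and "Kf (y 0 1 0) (y 1 1 0) (y 0 0 0) (y 0 1 1) (y 0 0 1) (y 1 1 1) (y 1 0 0) (y 1 0 1) < 0 \<and> (Kf (y 0 1 0) (y 1 1 0) (y 0 0 0) (y 0 1 1) (y 0 0 1) (y 1 1 1) (y 1 0 0) (y 1 0 1))^2 = Df (y 0 1 0) (y 1 1 0) (y 0 0 0) (y 0 1 1) (y 0 0 1) (y 1 1 1) (y 1 0 0) (y 1 0 1)"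
    and "Kf (y 0 0 1) (y 1 0 1) (y 0 1 1) (y 0 0 0) (y 0 1 0) (y 1 0 0) (y 1 1 1) (y 1 1 0) < 0 \<and> (Kf (y 0 0 1) (y 1 0 1) (y 0 1 1) (y 0 0 0) (y 0 1 0) (y 1 0 0) (y 1 1 1) (y 1 1 0))^2 = Df (y 0 0 1) (y 1 0 1) (y 0 1 1) (y 0 0 0) (y 0 1 0) (y 1 0 0) (y 1 1 1) (y 1 1 0)"
    and "Kf (y 0 1 1) (y 1 1 1) (y 0 0 1) (y 0 1 0) (y 0 0 0) (y 1 1 0) (y 1 0 1) (y 1 0 0) < 0 \<and> (Kf (y 0 1 1) (y 1 1 1) (y 0 0 1) (y 0 1 0) (y 0 0 0) (y 1 1 0) (y 1 0 1) (y 1 0 0))^2 = Df (y 0 1 1) (y 1 1 1) (y 0 0 1) (y 0 1 0) (y 0 0 0) (y 1 1 0) (y 1 0 1) (y 1 0 0)"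
    and "Kf (y 1 0 1) (y 0 0 1) (y 1 1 1) (y 1 0 0) (y 1 1 0) (y 0 0 0) (y 0 1 1) (y 0 1 0) < 0 \<and> (Kf (y 1 0 1) (y 0 0 1) (y 1 1 1) (y 1 0 0) (y 1 1 0) (y 0 0 0) (y 0 1 1) (y 0 1 0))^2 = Df (y 1 0 1) (y 0 0 1) (y 1 1 1) (y 1 0 0) (y 1 1 0) (y 0 0 0) (y 0 1 1) (y 0 1 0)"
    and "Kf (y 1 1 0) (y 0 1 0) (y 1 0 0) (y 1 1 1) (y 1 0 1) (y 0 1 1) (y 0 0 0) (y 0 0 1) < 0 \<and> (Kf (y 1 1 0) (y 0 1 0) (y 1 0 0) (y 1 1 1) (y 1 0 1) (y 0 1 1) (y 0 0 0) (y 0 0 1))^2 = Df (y 1 1 0) (y 0 1 0) (y 1 0 0) (y 1 1 1) (y 1 0 1) (y 0 1 1) (y 0 0 0) (y 0 0 1)"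
    and "Kf (y 1 1 1) (y 0 1 1) (y 1 0 1) (y 1 1 0) (y 1 0 0) (y 0 1 0) (y 0 0 1) (y 0 0 0) > 0 \<and> (Kf (y 1 1 1) (y 0 1 1) (y 1 0 1) (y 1 1 0) (y 1 0 0) (y 0 1 0) (y 0 0 1) (y 0 0 0))^2 = Df (y 1 1 1) (y 0 1 1) (y 1 0 1) (y 1 1 0) (y 1 0 0) (y 0 1 0) (y 0 0 1) (y 0 0 0)"
proof -
  have hall: "\<forall>s. x s > 0" using assms unfolding positive_kashaev_def by blast
  have pos: "\<And>i j k. y i j k > 0" using hall unfolding y_def by blast
  note hw = assms(1)[unfolded positive_kashaev_def, THEN conjunct2, rule_format, of w]
  define S where "S = sqrt ((y 0 0 0 * y 0 1 1 + y 0 1 0 * y 0 0 1) * (y 0 0 0 * y 1 0 1 + y 1 0 0 * y 0 0 1) * (y 0 0 0 * y 1 1 0 + y 1 0 0 * y 0 1 0))"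
  have h: "y 1 1 1 = (2 * y 1 0 0 * y 0 1 0 * y 0 0 1 + y 0 0 0 * (y 1 0 0 * y 0 1 1 + y 0 1 0 * y 1 0 1 + y 0 0 1 * y 1 1 0) + 2 * S) / (y 0 0 0)^2"
    using hw unfolding y_def S_def Let_def by simp
  have Dp: "(y 0 0 0 * y 0 1 1 + y 0 1 0 * y 0 0 1) * (y 0 0 0 * y 1 0 1 + y 1 0 0 * y 0 0 1) * (y 0 0 0 * y 1 1 0 + y 1 0 0 * y 0 1 0) > 0"
    using pos by (intro add_pos_pos mult_pos_pos) auto
  have S0: "S > 0" unfolding S_def using Dp by simp
  have S2: "S^2 = (y 0 0 0 * y 0 1 1 + y 0 1 0 * y 0 0 1) * (y 0 0 0 * y 1 0 1 + y 1 0 0 * y 0 0 1) * (y 0 0 0 * y 1 1 0 + y 1 0 0 * y 0 1 0)"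
    unfolding S_def using Dp by simp
  note hyps = pos[of 0 0 0] pos[of 1 0 0] pos[of 0 1 0] pos[of 0 0 1] pos[of 0 1 1] pos[of 1 0 1] pos[of 1 1 0] S0 S2 h
  show "Kf (y 0 0 0) (y 1 0 0) (y 0 1 0) (y 0 0 1) (y 0 1 1) (y 1 0 1) (y 1 1 0) (y 1 1 1) > 0 \<and> (Kf (y 0 0 0) (y 1 0 0) (y 0 1 0) (y 0 0 1) (y 0 1 1) (y 1 0 1) (y 1 1 0) (y 1 1 1))^2 = Df (y 0 0 0) (y 1 0 0) (y 0 1 0) (y 0 0 1) (y 0 1 1) (y 1 0 1) (y 1 1 0) (y 1 1 1)" by (rule v000[OF hyps])
  show "Kf (y 1 0 0) (y 0 0 0) (y 1 1 0) (y 1 0 1) (y 1 1 1) (y 0 0 1) (y 0 1 0) (y 0 1 1) < 0 \<and> (Kf (y 1 0 0) (y 0 0 0) (y 1 1 0) (y 1 0 1) (y 1 1 1) (y 0 0 1) (y 0 1 0) (y 0 1 1))^2 = Df (y 1 0 0) (y 0 0 0) (y 1 1 0) (y 1 0 1) (y 1 1 1) (y 0 0 1) (y 0 1 0) (y 0 1 1)" by (rule v100[OF hyps])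
  show "Kf (y 0 1 0) (y 1 1 0) (y 0 0 0) (y 0 1 1) (y 0 0 1) (y 1 1 1) (y 1 0 0) (y 1 0 1) < 0 \<and> (Kf (y 0 1 0) (y 1 1 0) (y 0 0 0) (y 0 1 1) (y 0 0 1) (y 1 1 1) (y 1 0 0) (y 1 0 1))^2 = Df (y 0 1 0) (y 1 1 0) (y 0 0 0) (y 0 1 1) (y 0 0 1) (y 1 1 1) (y 1 0 0) (y 1 0 1)" by (rule v010[OF hyps])
  show "Kf (y 0 0 1) (y 1 0 1) (y 0 1 1) (y 0 0 0) (y 0 1 0) (y 1 0 0) (y 1 1 1) (y 1 1 0) < 0 \<and> (Kf (y 0 0 1) (y 1 0 1) (y 0 1 1) (y 0 0 0) (y 0 1 0) (y 1 0 0) (y 1 1 1) (y 1 1 0))^2 = Df (y 0 0 1) (y 1 0 1) (y 0 1 1) (y 0 0 0) (y 0 1 0) (y 1 0 0) (y 1 1 1) (y 1 1 0)" by (rule v001[OF hyps])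
  show "Kf (y 0 1 1) (y 1 1 1) (y 0 0 1) (y 0 1 0) (y 0 0 0) (y 1 1 0) (y 1 0 1) (y 1 0 0) < 0 \<and> (Kf (y 0 1 1) (y 1 1 1) (y 0 0 1) (y 0 1 0) (y 0 0 0) (y 1 1 0) (y 1 0 1) (y 1 0 0))^2 = Df (y 0 1 1) (y 1 1 1) (y 0 0 1) (y 0 1 0) (y 0 0 0) (y 1 1 0) (y 1 0 1) (y 1 0 0)" by (rule v011[OF hyps])
  show "Kf (y 1 0 1) (y 0 0 1) (y 1 1 1) (y 1 0 0) (y 1 1 0) (y 0 0 0) (y 0 1 1) (y 0 1 0) < 0 \<and> (Kf (y 1 0 1) (y 0 0 1) (y 1 1 1) (y 1 0 0) (y 1 1 0) (y 0 0 0) (y 0 1 1) (y 0 1 0))^2 = Df (y 1 0 1) (y 0 0 1) (y 1 1 1) (y 1 0 0) (y 1 1 0) (y 0 0 0) (y 0 1 1) (y 0 1 0)" by (rule v101[OF hyps])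
  show "Kf (y 1 1 0) (y 0 1 0) (y 1 0 0) (y 1 1 1) (y 1 0 1) (y 0 1 1) (y 0 0 0) (y 0 0 1) < 0 \<and> (Kf (y 1 1 0) (y 0 1 0) (y 1 0 0) (y 1 1 1) (y 1 0 1) (y 0 1 1) (y 0 0 0) (y 0 0 1))^2 = Df (y 1 1 0) (y 0 1 0) (y 1 0 0) (y 1 1 1) (y 1 0 1) (y 0 1 1) (y 0 0 0) (y 0 0 1)" by (rule v110[OF hyps])
  show "Kf (y 1 1 1) (y 0 1 1) (y 1 0 1) (y 1 1 0) (y 1 0 0) (y 0 1 0) (y 0 0 1) (y 0 0 0) > 0 \<and> (Kf (y 1 1 1) (y 0 1 1) (y 1 0 1) (y 1 1 0) (y 1 0 0) (y 0 1 0) (y 0 0 1) (y 0 0 0))^2 = Df (y 1 1 1) (y 0 1 1) (y 1 0 1) (y 1 1 0) (y 1 0 0) (y 0 1 0) (y 0 0 1) (y 0 0 0)" by (rule v111[OF hyps])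
qed


lemma final_step:
  fixes k1 k2 k3 k4 k5 k6 k7 k8 D1 D2 D3 D4 D5 D6 D7 D8 Q :: real
  assumes "k1 > 0" "k2 < 0" "k3 < 0" "k4 < 0" "k5 < 0" "k6 < 0" "k7 < 0" "k8 > 0"
    "k1^2 = D1" "k2^2 = D2" "k3^2 = D3" "k4^2 = D4" "k5^2 = D5" "k6^2 = D6" "k7^2 = D7" "k8^2 = D8"
    "Q > 0" "Q^2 = D1 * D2 * D3 * D4 * D5 * D6 * D7 * D8"
  shows "k1 * k2 * k3 * k4 * k5 * k6 * k7 * k8 = Q"
proof -
  have "k2 * k3 > 0" "k4 * k5 > 0" "k6 * k7 > 0" using assms by (auto intro: mult_neg_neg)
  then have p: "k1 * k2 * k3 * k4 * k5 * k6 * k7 * k8 > 0" using assms(1,8)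
    by (metis mult.assoc mult_pos_pos)
  have "(k1 * k2 * k3 * k4 * k5 * k6 * k7 * k8)^2 = Q^2" using assms by (simp add: power_mult_distrib)
  then show ?thesis using p assms(17) by (simp add: power2_eq_iff_nonneg)
qed

theorem theorem2p9:
  fixes x :: "int \<times> int \<times> int \<Rightarrow> real" and v :: "int \<times> int \<times> int"
  assumes "positive_kashaev x"
  shows "(\<Prod>s\<in>signs3. Kcube (\<lambda>w. complex_of_real (x w)) v s)
         = complex_of_real (\<Prod>d\<in>squares_at. sq_factor x v d)"
proof -
  obtain v1 v2 v3 where v: "v = (v1, v2, v3)" by (cases v) auto
  define pp where "pp i j k = (v1 + i, v2 + j, v3 + k)" for i j k :: int
  have vp: "v = pp 0 0 0" unfolding pp_def v by simp
  have va: "\<And>i j k a b c. vadd (pp i j k) (a, b, c) = pp (i + a) (j + b) (k + c)"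
    unfolding pp_def vadd_def by (simp add: add.assoc)
  have xpos: "\<forall>s. x s > 0" using assms unfolding positive_kashaev_def by blast
  define Kreal where "Kreal s = (case s of (s1, s2, s3) \<Rightarrow> Kf (x (vadd v (0,0,0))) (x (vadd v (s1,0,0))) (x (vadd v (0,s2,0))) (x (vadd v (0,0,s3))) (x (vadd v (0,s2,s3))) (x (vadd v (s1,0,s3))) (x (vadd v (s1,s2,0))) (x (vadd v (s1,s2,s3))))" for s :: pt
  define Dreal where "Dreal s = (case s of (s1, s2, s3) \<Rightarrow> Df (x (vadd v (0,0,0))) (x (vadd v (s1,0,0))) (x (vadd v (0,s2,0))) (x (vadd v (0,0,s3))) (x (vadd v (0,s2,s3))) (x (vadd v (s1,0,s3))) (x (vadd v (s1,s2,0))) (x (vadd v (s1,s2,s3))))" for s :: pt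
  have Kc: "Kcube (\<lambda>w. complex_of_real (x w)) v s = complex_of_real (Kreal s)" for s
    by (cases s) (simp add: Kcube_def Kreal_def Kf_def Let_def)
  have lhs: "(\<Prod>s\<in>signs3. Kcube (\<lambda>w. complex_of_real (x w)) v s) = complex_of_real (\<Prod>s\<in>signs3. Kreal s)"
    by (simp add: Kc)
  have sig: "signs3 = {(1,1,1),(-1,1,1),(1,-1,1),(1,1,-1),(1,-1,-1),(-1,1,-1),(-1,-1,1),(-1,-1,-1)}"
    unfolding signs3_def by auto
  have pK: "(\<Prod>s\<in>signs3. Kreal s) = Kreal (1,1,1) * Kreal (-1,1,1) * Kreal (1,-1,1) * Kreal (1,1,-1) * Kreal (1,-1,-1) * Kreal (-1,1,-1) * Kreal (-1,-1,1) * Kreal (-1,-1,-1)"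
    unfolding sig by (simp add: mult.assoc)
  have f1: "Kreal (1,1,1) > 0 \<and> (Kreal (1,1,1))^2 = Dreal (1,1,1)"
    using cube_facts(1)[OF assms, of "pp 0 0 0"] unfolding Kreal_def Dreal_def by (simp add: vp va)
  have f2: "Kreal (-1,1,1) < 0 \<and> (Kreal (-1,1,1))^2 = Dreal (-1,1,1)"
    using cube_facts(2)[OF assms, of "pp (-1) 0 0"] unfolding Kreal_def Dreal_def by (simp add: vp va)
  have f3: "Kreal (1,-1,1) < 0 \<and> (Kreal (1,-1,1))^2 = Dreal (1,-1,1)"
    using cube_facts(3)[OF assms, of "pp 0 (-1) 0"] unfolding Kreal_def Dreal_def by (simp add: vp va)
  have f4: "Kreal (1,1,-1) < 0 \<and> (Kreal (1,1,-1))^2 = Dreal (1,1,-1)"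
    using cube_facts(4)[OF assms, of "pp 0 0 (-1)"] unfolding Kreal_def Dreal_def by (simp add: vp va)
  have f5: "Kreal (1,-1,-1) < 0 \<and> (Kreal (1,-1,-1))^2 = Dreal (1,-1,-1)"
    using cube_facts(5)[OF assms, of "pp 0 (-1) (-1)"] unfolding Kreal_def Dreal_def by (simp add: vp va)
  have f6: "Kreal (-1,1,-1) < 0 \<and> (Kreal (-1,1,-1))^2 = Dreal (-1,1,-1)"
    using cube_facts(6)[OF assms, of "pp (-1) 0 (-1)"] unfolding Kreal_def Dreal_def by (simp add: vp va)
  have f7: "Kreal (-1,-1,1) < 0 \<and> (Kreal (-1,-1,1))^2 = Dreal (-1,-1,1)"
    using cube_facts(7)[OF assms, of "pp (-1) (-1) 0"] unfolding Kreal_def Dreal_def by (simp add: vp va)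
  have f8: "Kreal (-1,-1,-1) > 0 \<and> (Kreal (-1,-1,-1))^2 = Dreal (-1,-1,-1)"
    using cube_facts(8)[OF assms, of "pp (-1) (-1) (-1)"] unfolding Kreal_def Dreal_def by (simp add: vp va)
  have sqs: "squares_at = {((1,2),1,1),((1,2),1,-1),((1,2),-1,1),((1,2),-1,-1),((1,3),1,1),((1,3),1,-1),((1,3),-1,1),((1,3),-1,-1),((2,3),1,1),((2,3),1,-1),((2,3),-1,1),((2,3),-1,-1)}"
    unfolding squares_at_def by auto
  have Qpos: "(\<Prod>d\<in>squares_at. sq_factor x v d) > 0"
  proof (rule prod_pos)
    fix d assume "d \<in> squares_at"
    have xp: "\<And>s. x s > 0" using xpos by blast
    show "sq_factor x v d > 0" unfolding sq_factor_def
      by (auto split: prod.splits intro!: add_pos_pos mult_pos_pos xp)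
  qed
  have Q2: "(\<Prod>d\<in>squares_at. sq_factor x v d)^2 = Dreal (1,1,1) * Dreal (-1,1,1) * Dreal (1,-1,1) * Dreal (1,1,-1) * Dreal (1,-1,-1) * Dreal (-1,1,-1) * Dreal (-1,-1,1) * Dreal (-1,-1,-1)"
    unfolding sqs Dreal_def Df_def
    by (simp add: sq_factor_def evec_def vp va power2_eq_square ac_simps)
  have "(\<Prod>s\<in>signs3. Kreal s) = (\<Prod>d\<in>squares_at. sq_factor x v d)"
    unfolding pK using final_step[OF f1[THEN conjunct1] f2[THEN conjunct1] f3[THEN conjunct1] f4[THEN conjunct1]
      f5[THEN conjunct1] f6[THEN conjunct1] f7[THEN conjunct1] f8[THEN conjunct1]
      f1[THEN conjunct2] f2[THEN conjunct2] f3[THEN conjunct2] f4[THEN conjunct2]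
      f5[THEN conjunct2] f6[THEN conjunct2] f7[THEN conjunct2] f8[THEN conjunct2] Qpos Q2]
    by (simp add: mult.assoc)
  then show ?thesis unfolding lhs by simp
qed

end
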